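(* Let $0\neq g\in\mathbb F_q[z]$, write $g=z^rg_0$ with $r\ge0$ and $g_0(0)\neq0$, and let $d_0=\deg g_0+m$ and $F_{g_0}(z)=P(z)g_0(z)g_0^*(z)$. Let $N\ge0$. Then $h\in V_N$ lies in the radical of the bilinear form $B_{g,N}(h,w)=B_A(gh,gw)$ on $V_N$ (i.e. $B_{g,N}(h,w)=0$ for all $w\in V_N$) if and only if \[ [z^j]\,F_{g_0}(z)h(z)=0\qquad\text{for all } d_0\le j\le d_0+N. \] In particular, $\dim\operatorname{rad}(B_{g,N})=\dim\operatorname{rad}(B_{g_0,N})$.
   Context: $q$ is an odd prime power; fix $m\ge0$, $c_0,\dots,c_m\in\mathbb F_q$ with $c_m\ne0$, $A(z)=c_0+\tfrac12\sum_{\ell=1}^m c_\ell(z^\ell+z^{-\ell})$ and $P(z)=z^mA(z)\in\mathbb F_q[z]$. $B_A(f,h)=\operatorname{CT}\,A(z)f(z)h(z^{-1})$ for polynomials $f,h$, where $\operatorname{CT}$ is the constant term of a Laurent polynomial. $V_N$ is the space of polynomials of degree $\le N$, $[z^j]F$ is the coefficient of $z^j$ in $F$, and for $g_0$ of degree $k_0$, $g_0^*(z)=z^{k_0}g_0(z^{-1})$. *)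

theory Defs
  imports "HOL-Computational_Algebra.Polynomial"
begin

text \<open>Coefficient of z^k (k an integer) in the Laurent polynomial
  A(z) = c_0 + 1/2 * sum_{l=1..m} c_l (z^l + z^-l).\<close>
definition Acoef :: "(nat \<Rightarrow> 'a::field) \<Rightarrow> nat \<Rightarrow> int \<Rightarrow> 'a" where
  "Acoef c m k = (if k = 0 then c 0
                  else if \<bar>k\<bar> \<le> int m then c (nat \<bar>k\<bar>) / 2 else 0)"

text \<open>P(z) = z^m A(z), a polynomial of degree at most 2m.\<close>
definition Ppoly :: "(nat \<Rightarrow> 'a::field) \<Rightarrow> nat \<Rightarrow> 'a poly" where
  "Ppoly c m = (\<Sum>k\<le>2*m. monom (Acoef c m (int k - int m)) k)"

text \<open>B_A(f,h) = CT A(z) f(z) h(z^-1): the term a_k f_i h_j z^(k+i-j) is constant iff k = j - i.\<close>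
definition BA :: "(nat \<Rightarrow> 'a::field) \<Rightarrow> nat \<Rightarrow> 'a poly \<Rightarrow> 'a poly \<Rightarrow> 'a" where
  "BA c m f h = (\<Sum>i\<le>degree f. \<Sum>j\<le>degree h.
                   Acoef c m (int j - int i) * coeff f i * coeff h j)"

definition VN :: "nat \<Rightarrow> 'a::zero poly set" where
  "VN N = {h. degree h \<le> N}"

definition radB :: "(nat \<Rightarrow> 'a::field) \<Rightarrow> nat \<Rightarrow> 'a poly \<Rightarrow> nat \<Rightarrow> 'a poly set" where
  "radB c m g N = {h \<in> VN N. \<forall>w \<in> VN N. BA c m (g * h) (g * w) = 0}"

end

theory Submission
  imports Defs
begin

lemma coeff_Ppoly: "coeff (Ppoly c m) k = Acoef c m (int k - int m)"
  by (auto simp: Ppoly_def coeff_sum Acoef_def)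

lemma Acoef_zero: "\<bar>k\<bar> > int m \<Longrightarrow> Acoef c m k = 0"
  by (auto simp: Acoef_def)

lemma coeff_Pf: "coeff (Ppoly c m * f) (j+m) = (\<Sum>i\<le>degree f. Acoef c m (int j - int i) * coeff f i)"
proof -
  let ?M = "max (j+m) (degree f)"
  have "coeff (Ppoly c m * f) (j+m) = coeff (f * Ppoly c m) (j+m)" by (simp add: mult.commute)
  also have "\<dots> = (\<Sum>i\<le>j+m. coeff f i * Acoef c m (int j - int i))"
    unfolding coeff_mult by (intro sum.cong refl) (simp add: coeff_Ppoly of_nat_diff)
  also have "\<dots> = (\<Sum>i\<le>?M. coeff f i * Acoef c m (int j - int i))"
    by (intro sum.mono_neutral_left) (auto simp: Acoef_zero)
  also have "\<dots> = (\<Sum>i\<le>degree f. coeff f i * Acoef c m (int j - int i))"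
    by (intro sum.mono_neutral_right) (auto simp: coeff_eq_0)
  finally show ?thesis by (simp add: mult.commute)
qed

lemma coeff_refl: "coeff (Q * reflect_poly w) (n + degree w) = (\<Sum>j\<le>degree w. coeff Q (n + j) * coeff w j)"
proof -
  have "coeff (Q * reflect_poly w) (n + degree w) =
     (\<Sum>i\<le>n + degree w. coeff Q i * coeff (reflect_poly w) (n + degree w - i))"
    by (simp add: coeff_mult)
  also have "\<dots> = (\<Sum>i\<in>(\<lambda>j. n + j) ` {..degree w}. coeff Q i * coeff (reflect_poly w) (n + degree w - i))"
  proof (intro sum.mono_neutral_right)
    show "\<forall>i\<in>{..n + degree w} - (\<lambda>j. n + j) ` {..degree w}.
      coeff Q i * coeff (reflect_poly w) (n + degree w - i) = 0"
    proof
      fix i assume i: "i \<in> {..n + degree w} - (\<lambda>j. n + j) ` {..degree w}"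
      have "\<not> n \<le> i"
      proof
        assume "n \<le> i"
        then have "i = n + (i - n)" by simp
        moreover have "i - n \<in> {..degree w}" using i by auto
        ultimately show False using i by blast
      qed
      then show "coeff Q i * coeff (reflect_poly w) (n + degree w - i) = 0"
        by (auto simp: coeff_reflect_poly)
    qed
  qed auto
  also have "\<dots> = (\<Sum>j\<le>degree w. coeff Q (n + j) * coeff w j)"
    by (subst sum.reindex) (auto simp: inj_on_def coeff_reflect_poly intro!: sum.cong)
  finally show ?thesis .
qed

lemma BA_formula: "BA c m f h = coeff (Ppoly c m * f * reflect_poly h) (m + degree h)"
proof -
  have "BA c m f h = (\<Sum>j\<le>degree h. coeff (Ppoly c m * f) (m + j) * coeff h j)"
    unfolding BA_def
  proof (subst sum.swap, intro sum.cong refl)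
    fix j assume "j \<in> {..degree h}"
    have "coeff (Ppoly c m * f) (m + j) = (\<Sum>i\<le>degree f. Acoef c m (int j - int i) * coeff f i)"
      using coeff_Pf[of c m f j] by (simp add: add.commute)
    then show "(\<Sum>i\<le>degree f. Acoef c m (int j - int i) * coeff f i * coeff h j) =
      coeff (Ppoly c m * f) (m + j) * coeff h j"
      by (simp add: sum_distrib_right)
  qed
  also have "\<dots> = coeff (Ppoly c m * f * reflect_poly h) (m + degree h)"
    by (simp add: coeff_refl)
  finally show ?thesis .
qed


lemma reflect_monom1: "reflect_poly (monom (1::'a::field) r) = 1"
  by (rule poly_eqI) (auto simp: coeff_reflect_poly degree_monom_eq coeff_monom coeff_1)

lemma BA_shift:
  fixes f h :: "'a::field poly"
  shows "BA c m (monom 1 r * f) (monom 1 r * h) = BA c m f h"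
proof (cases "h = 0")
  case True
  then show ?thesis by (simp add: BA_formula)
next
  case False
  have d: "degree (monom (1::'a) r * h) = r + degree h"
    using False by (simp add: degree_mult_eq degree_monom_eq)
  have "BA c m (monom 1 r * f) (monom 1 r * h)
     = coeff (monom 1 r * (Ppoly c m * f * reflect_poly h)) (r + (m + degree h))"
    unfolding BA_formula d by (simp add: reflect_poly_mult reflect_monom1 ac_simps)
  also have "\<dots> = BA c m f h"
    by (simp add: coeff_monom_mult BA_formula)
  finally show ?thesis .
qed

lemma BA_key:
  fixes g0 h w :: "'a::field poly"
  assumes g0: "g0 \<noteq> 0"
  shows "BA c m (g0 * h) (g0 * w) =
    (\<Sum>j\<le>degree w. coeff (Ppoly c m * g0 * reflect_poly g0 * h) (degree g0 + m + j) * coeff w j)"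
proof (cases "w = 0")
  case True
  then show ?thesis by (simp add: BA_formula)
next
  case False
  have d: "degree (g0 * w) = degree g0 + degree w"
    using False g0 by (simp add: degree_mult_eq)
  have "BA c m (g0 * h) (g0 * w) =
     coeff ((Ppoly c m * g0 * reflect_poly g0 * h) * reflect_poly w) ((degree g0 + m) + degree w)"
    by (simp add: BA_formula d reflect_poly_mult ac_simps)
  then show ?thesis by (simp add: coeff_refl)
qed

lemma BA_keyN:
  fixes g0 h w :: "'a::field poly"
  assumes g0: "g0 \<noteq> 0" and w: "degree w \<le> N"
  shows "BA c m (g0 * h) (g0 * w) =
    (\<Sum>j\<le>N. coeff (Ppoly c m * g0 * reflect_poly g0 * h) (degree g0 + m + j) * coeff w j)"
  unfolding BA_key[OF g0]
  by (intro sum.mono_neutral_left) (use w in \<open>auto simp: coeff_eq_0\<close>)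

theorem lemma5p1:
  fixes c :: "nat \<Rightarrow> 'a::{field,finite}" and m :: nat
    and g g0 :: "'a poly" and r N :: nat
  assumes q_odd: "odd (card (UNIV :: 'a set))"
    and cm: "c m \<noteq> 0"
    and g_nz: "g \<noteq> 0"
    and g_decomp: "g = monom 1 r * g0"
    and g0_0: "poly g0 0 \<noteq> 0"
  shows "(\<forall>h \<in> VN N. h \<in> radB c m g N \<longleftrightarrow>
            (\<forall>j. degree g0 + m \<le> j \<and> j \<le> degree g0 + m + N \<longrightarrow>
                 coeff (Ppoly c m * g0 * reflect_poly g0 * h) j = 0))
         \<and> vector_space.dim smult (radB c m g N) = vector_space.dim smult (radB c m g0 N)"
proof -
  have g0: "g0 \<noteq> 0" using g0_0 by auto
  have eq: "radB c m g N = radB c m g0 N"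
    unfolding radB_def g_decomp by (simp add: mult.assoc BA_shift)
  have "h \<in> radB c m g0 N \<longleftrightarrow>
            (\<forall>j. degree g0 + m \<le> j \<and> j \<le> degree g0 + m + N \<longrightarrow>
                 coeff (Ppoly c m * g0 * reflect_poly g0 * h) j = 0)" if h: "h \<in> VN N" for h
  proof -
    let ?Q = "Ppoly c m * g0 * reflect_poly g0 * h"
    have "h \<in> radB c m g0 N \<longleftrightarrow> (\<forall>w \<in> VN N.
        (\<Sum>j\<le>N. coeff ?Q (degree g0 + m + j) * coeff w j) = 0)"
      using h by (simp add: radB_def VN_def BA_keyN[OF g0])
    also have "\<dots> \<longleftrightarrow> (\<forall>j\<le>N. coeff ?Q (degree g0 + m + j) = 0)"
    proof
      assume A: "\<forall>w \<in> VN N. (\<Sum>j\<le>N. coeff ?Q (degree g0 + m + j) * coeff w j) = 0"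
      show "\<forall>j\<le>N. coeff ?Q (degree g0 + m + j) = 0"
      proof (intro allI impI)
        fix j assume j: "j \<le> N"
        have "(monom 1 j :: 'a poly) \<in> VN N" using j degree_monom_le[of "1::'a" j] by (simp add: VN_def)
        with A have "(\<Sum>i\<le>N. coeff ?Q (degree g0 + m + i) * coeff (monom 1 j) i) = 0" by blast
        then show "coeff ?Q (degree g0 + m + j) = 0"
          using j by (simp add: coeff_monom mult.commute[of _ "if _ then _ else _"] if_distrib[of "\<lambda>x. x * _"] cong: if_cong)
      qed
    qed simp
    also have "\<dots> \<longleftrightarrow> (\<forall>j. degree g0 + m \<le> j \<and> j \<le> degree g0 + m + N \<longrightarrow> coeff ?Q j = 0)"
    proof
      assume A: "\<forall>j\<le>N. coeff ?Q (degree g0 + m + j) = 0"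
      show "\<forall>j. degree g0 + m \<le> j \<and> j \<le> degree g0 + m + N \<longrightarrow> coeff ?Q j = 0"
      proof (intro allI impI)
        fix j assume j: "degree g0 + m \<le> j \<and> j \<le> degree g0 + m + N"
        then have "j = degree g0 + m + (j - (degree g0 + m))" "j - (degree g0 + m) \<le> N" by auto
        then show "coeff ?Q j = 0" using A by metis
      qed
    qed auto
    finally show ?thesis .
  qed
  then show ?thesis using eq by simp
qed

end
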